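(* Let $n\ge1$, $p\ge1$, $m\ge p$, $q\in\{1,2,\ldots\}$, $\alpha>0$ and $N=n+p+qm+1$. For $s\ge0$ let $\mu_q(s)$ be the positive solution of $N\mu^q-ns\mu^{q-1}-q\alpha^q=0$. Then $\mu_q(s)$ is well defined (the positive solution exists and is unique), and: (i) if $S=V\operatorname{diag}(s_1,\ldots,s_p)V^\top$ with $V$ orthogonal, then the MAP estimator with prior parameters $(\alpha I_p,m,q)$ equals $\hat\Sigma=V\operatorname{diag}(\mu_q(s_1),\ldots,\mu_q(s_p))V^\top$; (ii) $\mu_q(0)=\alpha(q/N)^{1/q}$ and $\mu_q(s)\ge\alpha(q/N)^{1/q}$ for all $s\ge0$; (iii) $\mu_q(s)\ge \frac nN s$ for all $s\ge0$; (iv) $\lim_{s\to\infty}\mu_q(s)/s=n/N$.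
   Context: Data $X_1,\ldots,X_n\in\mathbb R^p$, $\bar X=\frac1n\sum_iX_i$, $S=\frac1n\sum_i(X_i-\bar X)(X_i-\bar X)^\top$ (symmetric positive semidefinite). For $\Psi$ positive definite, $m\ge p$ and $q$ a positive integer, the MAP estimator $\hat\Sigma$ is the $\Sigma$-component of the unique maximizer over $\mu\in\mathbb R^p$, $\Sigma$ positive definite, of $|\Sigma|^{-n/2}\exp(-\tfrac12\sum_i(X_i-\mu)^\top\Sigma^{-1}(X_i-\mu))\cdot\exp(-\tfrac12\operatorname{tr}((\Psi^{-1/2}\Sigma\Psi^{-1/2})^{-q}))|\Sigma|^{-(qm+p+1)/2}$, where $\Psi^{1/2}$ is the positive definite square root. *)

theory Defs
  imports "HOL-Analysis.Analysis"
begin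

text \<open>Matrices are of type real^'p^'p (dimension p = CARD('p)). Note that the operation
  * on this type is entrywise, so matrix powers are defined via the matrix product **.\<close>

definition mat_pow :: "real^'p^'p \<Rightarrow> nat \<Rightarrow> real^'p^'p" where
  "mat_pow A k = (((**) A) ^^ k) (mat 1)"

definition sym_mat :: "real^'p^'p \<Rightarrow> bool" where
  "sym_mat A \<longleftrightarrow> transpose A = A"

definition pos_def :: "real^'p^'p \<Rightarrow> bool" where
  "pos_def A \<longleftrightarrow> sym_mat A \<and> (\<forall>x. x \<noteq> 0 \<longrightarrow> x \<bullet> (A *v x) > 0)"

definition outer :: "real^'p \<Rightarrow> real^'p \<Rightarrow> real^'p^'p" where
  "outer u v = (\<chi> i j. u $ i * v $ j)"

definition diag_mat :: "('p \<Rightarrow> real) \<Rightarrow> real^'p^'p" where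
  "diag_mat d = (\<chi> i j. if i = j then d i else 0)"

text \<open>Data X_0, ..., X_{n-1} (indexing from 0).\<close>
definition sample_mean :: "nat \<Rightarrow> (nat \<Rightarrow> real^'p) \<Rightarrow> real^'p" where
  "sample_mean n X = (1 / real n) *\<^sub>R (\<Sum>i<n. X i)"

definition sample_cov :: "nat \<Rightarrow> (nat \<Rightarrow> real^'p) \<Rightarrow> real^'p^'p" where
  "sample_cov n X = (1 / real n) *\<^sub>R
     (\<Sum>i<n. outer (X i - sample_mean n X) (X i - sample_mean n X))"

definition mat_sqrt :: "real^'p^'p \<Rightarrow> real^'p^'p" where
  "mat_sqrt Psi = (THE R. pos_def R \<and> R ** R = Psi)"

text \<open>Posterior objective (likelihood times prior kernel).\<close>
definition map_objective ::
  "nat \<Rightarrow> (nat \<Rightarrow> real^'p) \<Rightarrow> real^'p^'p \<Rightarrow> real \<Rightarrow> nat \<Rightarrow> real^'p \<Rightarrow> real^'p^'p \<Rightarrow> real" where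
  "map_objective n X Psi m q mu Sg =
     (let Ri = matrix_inv (mat_sqrt Psi);
          SI = matrix_inv Sg
      in det Sg powr (- real n / 2)
         * exp (- (1/2) * (\<Sum>i<n. (X i - mu) \<bullet> (SI *v (X i - mu))))
         * exp (- (1/2) * trace (mat_pow (matrix_inv (Ri ** Sg ** Ri)) q))
         * det Sg powr (- (real q * m + real CARD('p) + 1) / 2))"

definition is_MAP_Sigma ::
  "nat \<Rightarrow> (nat \<Rightarrow> real^'p) \<Rightarrow> real^'p^'p \<Rightarrow> real \<Rightarrow> nat \<Rightarrow> real^'p^'p \<Rightarrow> bool" where
  "is_MAP_Sigma n X Psi m q Sh \<longleftrightarrow>
     (\<exists>muh. pos_def Sh \<and>
        (\<forall>mu Sg. pos_def Sg \<longrightarrow>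
            map_objective n X Psi m q mu Sg \<le> map_objective n X Psi m q muh Sh) \<and>
        (\<forall>mu Sg. pos_def Sg \<and>
            map_objective n X Psi m q mu Sg = map_objective n X Psi m q muh Sh
            \<longrightarrow> mu = muh \<and> Sg = Sh))"

definition mu_eq :: "real \<Rightarrow> nat \<Rightarrow> nat \<Rightarrow> real \<Rightarrow> real \<Rightarrow> real \<Rightarrow> bool" where
  "mu_eq N n q alpha s x \<longleftrightarrow> N * x ^ q - real n * s * x ^ (q - 1) - real q * alpha ^ q = 0"

definition mu_q :: "real \<Rightarrow> nat \<Rightarrow> nat \<Rightarrow> real \<Rightarrow> real \<Rightarrow> real" where
  "mu_q N n q alpha s = (THE x. x > 0 \<and> mu_eq N n q alpha s x)"

end

theory Submission
  imports Defs
begin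


lemma pow_split: "0 < (q::nat) \<Longrightarrow> (x::real) ^ q = x ^ (q - 1) * x"
  using power_minus_mult[of q x] by (simp add: mult.commute)

lemma root_bounds:
  fixes N alpha s x :: real and n q :: nat
  assumes q: "q \<ge> 1" and a: "alpha > 0" and N: "N > 0" and s: "s \<ge> 0"
    and c: "c > 0" "N * c ^ q = real q * alpha ^ q"
    and x: "x > 0" "mu_eq N n q alpha s x"
  shows "c \<le> x" "x \<le> c + real n * s / N" "real n * s / N < x"
proof -
  have e: "x ^ (q - 1) * (N * x - real n * s) = real q * alpha ^ q"
    using x(2) pow_split[of q x] q unfolding mu_eq_def by (simp add: algebra_simps)
  have qa: "real q * alpha ^ q > 0" using q a by simp
  have xq: "x ^ (q - 1) > 0" using x by simp
  have pos: "N * x - real n * s > 0"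
    using e qa xq by (metis zero_less_mult_pos)
  then show "real n * s / N < x" using N by (simp add: field_simps)
  show "c \<le> x"
  proof (rule ccontr)
    assume "\<not> c \<le> x"
    hence "x < c" by simp
    have "x ^ (q - 1) * (N * x - real n * s) \<le> x ^ (q - 1) * (N * x)"
      using xq s by (intro mult_left_mono) auto
    also have "\<dots> = N * x ^ q" using pow_split[of q x] q by simp
    also have "\<dots> < N * c ^ q" using \<open>x < c\<close> x N q
      by (intro mult_strict_left_mono power_strict_mono) auto
    finally show False using e c by simp
  qed
  show "x \<le> c + real n * s / N"
  proof (rule ccontr)
    assume "\<not> ?thesis"
    hence h: "N * x - real n * s > N * c" using N by (simp add: field_simps)
    have cx: "c ^ (q - 1) \<le> x ^ (q - 1)" using \<open>c \<le> x\<close> c by (intro power_mono) auto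
    have "N * c ^ q = c ^ (q - 1) * (N * c)" using pow_split[of q c] q by simp
    also have "\<dots> < c ^ (q - 1) * (N * x - real n * s)"
      using h c by (intro mult_strict_left_mono) auto
    also have "\<dots> \<le> x ^ (q - 1) * (N * x - real n * s)"
      using cx pos by (intro mult_right_mono) auto
    finally show False using e c by simp
  qed
qed

lemma root_exists:
  fixes N alpha s :: real and n q :: nat
  assumes q: "q \<ge> 1" and a: "alpha > 0" and N: "N > 0" and s: "s \<ge> 0"
    and c: "c > 0" "N * c ^ q = real q * alpha ^ q"
  shows "\<exists>x. x > 0 \<and> mu_eq N n q alpha s x"
proof -
  define h where "h x = N * x ^ q - real n * s * x ^ (q - 1) - real q * alpha ^ q" for x
  define b where "b = c + real n * s / N"
  have b: "c \<le> b" unfolding b_def using N s by simp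
  have hc: "h c \<le> 0" unfolding h_def using c s by simp
  have 1: "c ^ (q - 1) * (N * c) \<le> b ^ (q - 1) * (N * c)"
    using b c N by (intro mult_right_mono power_mono) auto
  have 2: "N * c = N * b - real n * s" unfolding b_def using N by (simp add: field_simps)
  have 3: "h b = b ^ (q - 1) * (N * b - real n * s) - N * c ^ q"
    unfolding h_def using pow_split[of q b] q c by (simp add: algebra_simps)
  have 4: "c ^ (q - 1) * (N * c) \<le> b ^ (q - 1) * (N * b - real n * s)"
    using 1 unfolding 2 .
  have 5: "N * c ^ q = c ^ (q - 1) * (N * c)" using pow_split[of q c] q by simp
  have "0 \<le> h b" unfolding 3 using 4 5 by linarith
  then obtain x where x: "c \<le> x" "x \<le> b" "h x = 0"
    using IVT[of h c 0 b] hc b unfolding h_def by (auto intro!: continuous_intros)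
  thus ?thesis using c unfolding mu_eq_def h_def by (intro exI[of _ x]) auto
qed

lemma root_unique:
  fixes N alpha s :: real and n q :: nat
  assumes q: "q \<ge> 1" and a: "alpha > 0" and N: "N > 0" and s: "s \<ge> 0"
    and x: "x > 0" "mu_eq N n q alpha s x" and y: "y > 0" "mu_eq N n q alpha s y"
  shows "x = y"
proof -
  have e: "z ^ (q - 1) * (N * z - real n * s) = real q * alpha ^ q"
    if "mu_eq N n q alpha s z" for z
    using that pow_split[of q z] q unfolding mu_eq_def by (simp add: algebra_simps)
  have qa: "real q * alpha ^ q > 0" using q a by simp
  have pos: "N * z - real n * s > 0" if "z > 0" "mu_eq N n q alpha s z" for z
    using e[OF that(2)] qa that(1) by (metis zero_less_mult_pos zero_less_power)
  have lt: False if "u < v" "u > 0" "mu_eq N n q alpha s u" "mu_eq N n q alpha s v" for u v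
  proof -
    have "u ^ (q - 1) * (N * u - real n * s) < v ^ (q - 1) * (N * v - real n * s)"
      using that pos[of u] N
      by (intro mult_le_less_imp_less power_mono) (auto simp: zero_less_power)
    thus False using e that by simp
  qed
  show ?thesis using lt[of x y] lt[of y x] x y by (cases "x < y"; cases "y < x") auto
qed



lemma sym_dot:
  fixes A :: "real^'p^'p"
  assumes "sym_mat A"
  shows "(A *v x) \<bullet> y = x \<bullet> (A *v y)"
proof -
  have "x \<bullet> (A *v y) = (x v* A) \<bullet> y" by (simp add: dot_lmul_matrix)
  moreover have "A *v x = x v* A"
    by (metis assms sym_mat_def transpose_matrix_vector)
  ultimately show ?thesis by simp
qed

lemma pd_pos: "pos_def A \<Longrightarrow> x \<noteq> 0 \<Longrightarrow> x \<bullet> (A *v x) > 0"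
  by (simp add: pos_def_def)

lemma pd_sym: "pos_def A \<Longrightarrow> sym_mat A"
  by (simp add: pos_def_def)

lemma pd_ker:
  fixes A :: "real^'p^'p"
  assumes "pos_def A" "A *v x = 0" shows "x = 0"
  using pd_pos[OF assms(1), of x] assms(2) by auto

lemma pd_inj:
  fixes A :: "real^'p^'p"
  assumes "pos_def A" shows "inj ((*v) A)"
proof (rule injI)
  fix x y assume "A *v x = A *v y"
  hence "A *v (x - y) = 0" by (simp add: matrix_vector_mult_diff_distrib)
  thus "x = y" using pd_ker[OF assms, of "x - y"] by simp
qed

lemma pd_invertible:
  fixes A :: "real^'p^'p"
  assumes "pos_def A" shows "invertible A"
  using pd_inj[OF assms] matrix_left_invertible_injective invertible_left_inverse by blast

lemma inv_props:
  fixes A :: "real^'p^'p"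
  assumes "invertible A"
  shows "A ** matrix_inv A = mat 1" "matrix_inv A ** A = mat 1"
proof -
  have "\<exists>A'. A ** A' = mat 1 \<and> A' ** A = mat 1" using assms by (simp add: invertible_def)
  hence "A ** matrix_inv A = mat 1 \<and> matrix_inv A ** A = mat 1"
    unfolding matrix_inv_def by (rule someI_ex)
  thus "A ** matrix_inv A = mat 1" "matrix_inv A ** A = mat 1" by auto
qed

lemma inv_unique:
  fixes A B :: "real^'p^'p"
  assumes "A ** B = mat 1"
  shows "matrix_inv A = B"
proof -
  have BA: "B ** A = mat 1" using assms matrix_left_right_inverse by blast
  have inv: "invertible A" using assms BA by (auto simp: invertible_def)
  have "matrix_inv A = matrix_inv A ** (A ** B)" using assms by simp
  also have "\<dots> = (matrix_inv A ** A) ** B" by (simp add: matrix_mul_assoc)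
  also have "\<dots> = B" using inv_props[OF inv] by simp
  finally show ?thesis .
qed

lemma pd_inv:
  fixes A :: "real^'p^'p"
  assumes A: "pos_def A"
  shows "pos_def (matrix_inv A)"
proof -
  have inv: "invertible A" using pd_invertible[OF A] .
  note I = inv_props[OF inv]
  let ?B = "matrix_inv A"
  have "transpose ?B ** A = mat 1"
    using arg_cong[OF I(1), of transpose] pd_sym[OF A]
    by (simp add: matrix_transpose_mul sym_mat_def)
  hence "transpose ?B = matrix_inv A"
    using I(1) by (metis matrix_mul_assoc matrix_mul_lid matrix_mul_rid)
  hence sym: "sym_mat ?B" by (simp add: sym_mat_def)
  have "x \<bullet> (?B *v x) > 0" if "x \<noteq> 0" for x
  proof -
    let ?y = "?B *v x"
    have Ay: "A *v ?y = x" using I(1) by (simp add: matrix_vector_mul_assoc)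
    hence "?y \<noteq> 0" using that by auto
    hence "?y \<bullet> (A *v ?y) > 0" using pd_pos[OF A] by auto
    thus ?thesis using Ay by (simp add: inner_commute)
  qed
  thus ?thesis using sym by (simp add: pos_def_def)
qed

lemma mat_pow_0 [simp]: "mat_pow A 0 = mat 1"
  by (simp add: mat_pow_def)

lemma mat_pow_Suc: "mat_pow A (Suc k) = A ** mat_pow A k"
  by (simp add: mat_pow_def)

lemma cauchy_M:
  fixes M :: "real^'p^'p"
  assumes M: "pos_def M"
  shows "(x \<bullet> (M *v y))^2 \<le> (x \<bullet> (M *v x)) * (y \<bullet> (M *v y))"
proof (cases "y = 0")
  case True thus ?thesis by simp
next
  case False
  have sy: "y \<bullet> (M *v x) = x \<bullet> (M *v y)"
    using sym_dot[OF pd_sym[OF M], of y x] by (simp add: inner_commute)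
  let ?b = "x \<bullet> (M *v y)" and ?a = "x \<bullet> (M *v x)" and ?c = "y \<bullet> (M *v y)"
  have c: "?c > 0" using pd_pos[OF M False] .
  define t where "t = - ?b / ?c"
  have "0 \<le> (x + t *\<^sub>R y) \<bullet> (M *v (x + t *\<^sub>R y))"
    using pd_pos[OF M, of "x + t *\<^sub>R y"] by (cases "x + t *\<^sub>R y = 0") auto
  also have "\<dots> = ?a + 2 * t * ?b + t^2 * ?c"
    using sy by (simp add: matrix_vector_right_distrib matrix_vector_mult_scaleR
        inner_add_left inner_add_right power2_eq_square algebra_simps)
  also have "\<dots> = ?a - ?b^2 / ?c" unfolding t_def using c
    by (simp add: field_simps power2_eq_square)
  finally show ?thesis using c by (simp add: field_simps)
qed

lemma diag_pow_ge:
  fixes M :: "real^'p^'p"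
  assumes M: "pos_def M"
  shows "(mat_pow M k) $ i $ i \<ge> (M $ i $ i) ^ k"
proof -
  define e :: "real^'p" where "e = axis i 1"
  define w where "w k = mat_pow M k *v e" for k
  define g where "g k = e \<bullet> w k" for k
  have sM: "sym_mat M" using pd_sym[OF M] .
  have wS: "w (Suc k) = M *v w k" for k
    unfolding w_def by (simp add: mat_pow_Suc matrix_vector_mul_assoc)
  have w0: "w 0 = e" unfolding w_def by simp
  have wprod: "w a \<bullet> w b = g (a + b)" for a b
  proof (induction a arbitrary: b)
    case 0 thus ?case by (simp add: w0 g_def)
  next
    case (Suc a)
    have "w (Suc a) \<bullet> w b = w a \<bullet> w (Suc b)"
      by (simp add: wS sym_dot[OF sM])
    also have "\<dots> = g (Suc a + b)" using Suc by simp
    finally show ?case .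
  qed
  have wnz: "w k \<noteq> 0" for k
  proof (induction k)
    case 0 thus ?case by (simp add: w0 e_def)
  next
    case (Suc k) thus ?case using pd_ker[OF M] by (auto simp: wS)
  qed
  have gpos: "g k > 0" for k
  proof -
    obtain j where "k = 2 * j \<or> k = 2 * j + 1" by (metis oddE evenE)
    thus ?thesis
    proof
      assume "k = 2 * j"
      hence "g k = w j \<bullet> w j" using wprod[of j j] by (simp add: mult_2)
      thus ?thesis using wnz[of j] by simp
    next
      assume "k = 2 * j + 1"
      hence "g k = w j \<bullet> (M *v w j)" using wprod[of j "Suc j"] by (simp add: wS mult_2)
      thus ?thesis using pd_pos[OF M wnz[of j]] by simp
    qed
  qed
  have lc: "g (k + 1) ^ 2 \<le> g k * g (k + 2)" for k
  proof -
    obtain j where "k = 2 * j \<or> k = 2 * j + 1" by (metis oddE evenE)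
    thus ?thesis
    proof
      assume k: "k = 2 * j"
      have "g (k + 1) = w j \<bullet> w (Suc j)" using wprod[of j "Suc j"] k by (simp add: mult_2)
      moreover have "g k = w j \<bullet> w j" using wprod[of j j] k by (simp add: mult_2)
      moreover have "g (k + 2) = w (Suc j) \<bullet> w (Suc j)" using wprod[of "Suc j" "Suc j"] k by (simp add: mult_2)
      ultimately show ?thesis using Cauchy_Schwarz_ineq[of "w j" "w (Suc j)"] by simp
    next
      assume k: "k = 2 * j + 1"
      have "g (k + 1) = w j \<bullet> (M *v w (Suc j))" using wprod[of j "Suc (Suc j)"] k by (simp add: wS mult_2)
      moreover have "g k = w j \<bullet> (M *v w j)" using wprod[of j "Suc j"] k by (simp add: wS mult_2)
      moreover have "g (k + 2) = w (Suc j) \<bullet> (M *v w (Suc j))"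
        using wprod[of "Suc j" "Suc (Suc j)"] k by (simp add: wS mult_2)
      ultimately show ?thesis using cauchy_M[OF M, of "w j" "w (Suc j)"] by simp
    qed
  qed
  have g0: "g 0 = 1" unfolding g_def w0 e_def by (simp add: inner_axis_axis)
  have step: "g (k + 1) \<ge> g 1 * g k" for k
  proof (induction k)
    case 0 thus ?case using g0 by simp
  next
    case (Suc k)
    have "g (k + 1) * (g 1 * g k) \<le> g (k + 1) * g (k + 1)"
      using Suc gpos[of "k+1"] by (intro mult_left_mono) auto
    also have "\<dots> \<le> g k * g (k + 2)" using lc[of k] by (simp add: power2_eq_square)
    finally have "g k * (g 1 * g (k + 1)) \<le> g k * g (k + 2)" by (simp add: algebra_simps)
    hence "g 1 * g (k + 1) \<le> g (k + 2)" using gpos[of k] by simp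
    thus ?case by simp
  qed
  have pw: "g k \<ge> g 1 ^ k" for k
  proof (induction k)
    case 0 thus ?case using g0 by simp
  next
    case (Suc k)
    have "g 1 ^ Suc k = g 1 * g 1 ^ k" by simp
    also have "\<dots> \<le> g 1 * g k" using Suc gpos[of 1] by (intro mult_left_mono) auto
    also have "\<dots> \<le> g (k + 1)" using step[of k] .
    finally show ?case by simp
  qed
  have gd: "g k = (mat_pow M k) $ i $ i" for k
    unfolding g_def w_def e_def inner_axis' by (simp add: matrix_vector_mult_def axis_def mult.commute[of _ "if _ then _ else _"] if_distrib sum.delta cong: if_cong)
  show ?thesis using pw[of k] gd[of k] gd[of 1] by (simp add: mat_pow_Suc)
qed


lemma pd_diag_pos:
  fixes M :: "real^'p^'p"
  assumes "pos_def M" shows "M $ i $ i > 0"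
proof -
  have "axis i 1 \<bullet> (M *v axis i (1::real)) > 0" using pd_pos[OF assms] by simp
  moreover have "axis i 1 \<bullet> (M *v axis i (1::real)) = M $ i $ i"
    unfolding inner_axis' by (simp add: matrix_vector_mult_def axis_def
        mult.commute[of _ "if _ then _ else _"] if_distrib sum.delta cong: if_cong)
  ultimately show ?thesis by simp
qed


definition Lmat :: "real^'p \<Rightarrow> 'p \<Rightarrow> real^'p^'p" where
  "Lmat u k = (\<chi> i a. (if a = i then 1 else 0) - (if a = k then u$i else 0))"

lemma Lmat_left: "(Lmat u k ** A) $ i $ b = A $ i $ b - u $ i * A $ k $ b"
proof -
  have "(Lmat u k ** A) $ i $ b = (\<Sum>a\<in>UNIV. (if a = i then A$a$b else 0) - (if a = k then u$i * A$a$b else 0))"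
    unfolding Lmat_def matrix_matrix_mult_def by (auto intro!: sum.cong simp: algebra_simps)
  also have "\<dots> = A $ i $ b - u $ i * A $ k $ b"
    by (simp add: sum_subtractf sum.delta)
  finally show ?thesis .
qed

lemma Lmat_right: "(A ** transpose (Lmat u k)) $ i $ j = A $ i $ j - u $ j * A $ i $ k"
proof -
  have "(A ** transpose (Lmat u k)) $ i $ j = (\<Sum>a\<in>UNIV. (if a = j then A$i$a else 0) - (if a = k then u$j * A$i$a else 0))"
    unfolding Lmat_def matrix_matrix_mult_def transpose_def by (auto intro!: sum.cong simp: algebra_simps)
  also have "\<dots> = A $ i $ j - u $ j * A $ i $ k"
    by (simp add: sum_subtractf sum.delta)
  finally show ?thesis .
qed

lemma row_mat1: "row j (mat 1 :: real^'p^'p) = axis j 1"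
  by (simp add: row_def mat_def axis_def vec_eq_iff)

lemma det_Lmat:
  fixes u :: "real^'p" and k :: 'p
  assumes "u $ k = 0"
  shows "det (Lmat u k) = 1"
proof -
  have span: "- u \<in> vec.span {row j (mat 1 :: real^'p^'p) |j. j \<noteq> k}"
  proof -
    have "- u = (\<Sum>j\<in>UNIV - {k}. (- u $ j) *s row j (mat 1 :: real^'p^'p))"
    proof (subst vec_eq_iff, intro allI)
      fix r
      have "(\<Sum>j\<in>UNIV - {k}. (- u $ j) *s row j (mat 1 :: real^'p^'p)) $ r
          = (\<Sum>j\<in>UNIV - {k}. (if j = r then - u $ j else 0))"
        unfolding sum_component by (intro sum.cong) (auto simp: row_mat1 axis_def)
      also have "\<dots> = - u $ r" using assms by (subst sum.delta) auto
      finally show "(- u) $ r = (\<Sum>j\<in>UNIV - {k}. (- u $ j) *s row j (mat 1 :: real^'p^'p)) $ r"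
        by simp
    qed
    also have "\<dots> \<in> vec.span {row j (mat 1 :: real^'p^'p) |j. j \<noteq> k}"
      by (intro vec.span_sum vec.span_scale vec.span_base) auto
    finally show ?thesis .
  qed
  have "transpose (Lmat u k) = (\<chi> r. if r = k then row k (mat 1) + - u else row r (mat 1))"
    using assms by (auto simp: vec_eq_iff Lmat_def transpose_def row_def mat_def)
  hence "det (transpose (Lmat u k)) = det (mat 1 :: real^'p^'p)"
    using det_row_span[OF span] by simp
  thus ?thesis by simp
qed

definition elim :: "real^'p^'p \<Rightarrow> 'p \<Rightarrow> real^'p^'p" where
  "elim M k = (\<chi> i j. if i = k \<and> j = k then M$k$k else if i = k \<or> j = k then 0
                      else M$i$j - M$i$k * M$k$j / M$k$k)"

lemma sym_entry: "sym_mat M \<Longrightarrow> M$i$j = M$j$i"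
  unfolding sym_mat_def by (metis transpose_def vec_lambda_beta)

lemma elim_eq:
  fixes M :: "real^'p^'p"
  assumes M: "sym_mat M" "M$k$k \<noteq> 0"
  defines "u \<equiv> (\<chi> i. if i = k then 0 else M$i$k / M$k$k)"
  shows "elim M k = Lmat u k ** M ** transpose (Lmat u k)"
proof (subst vec_eq_iff, intro allI, subst vec_eq_iff, intro allI)
  fix i j
  have R: "(Lmat u k ** M ** transpose (Lmat u k))$i$j
     = (M$i$j - u$i*M$k$j) - u$j * (M$i$k - u$i * M$k$k)"
    by (simp add: Lmat_left Lmat_right)
  show "elim M k $i$j = (Lmat u k ** M ** transpose (Lmat u k))$i$j"
    unfolding R
  proof (cases "i = k"; cases "j = k")
    assume "i = k" "j = k" thus "elim M k $ i $ j = M $ i $ j - u $ i * M $ k $ j - u $ j * (M $ i $ k - u $ i * M $ k $ k)"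
      by (simp add: elim_def u_def)
  next
    assume "i = k" "j \<noteq> k" thus "elim M k $ i $ j = M $ i $ j - u $ i * M $ k $ j - u $ j * (M $ i $ k - u $ i * M $ k $ k)"
      using M(2) sym_entry[OF M(1), of j k] by (simp add: elim_def u_def)
  next
    assume "i \<noteq> k" "j = k" thus "elim M k $ i $ j = M $ i $ j - u $ i * M $ k $ j - u $ j * (M $ i $ k - u $ i * M $ k $ k)"
      using M(2) by (simp add: elim_def u_def)
  next
    assume "i \<noteq> k" "j \<noteq> k" thus "elim M k $ i $ j = M $ i $ j - u $ i * M $ k $ j - u $ j * (M $ i $ k - u $ i * M $ k $ k)"
      using M(2) sym_entry[OF M(1), of j k] by (simp add: elim_def u_def field_simps)
  qed
qed
lemma elim_props:
  fixes M :: "real^'p^'p"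
  assumes M: "pos_def M"
  shows "pos_def (elim M k)" "det (elim M k) = det M"
    "\<And>i. elim M k $ i $ i \<le> M $ i $ i"
    "elim M k = M \<or> (\<exists>i. elim M k $ i $ i < M $ i $ i)"
    "\<And>i j. i \<noteq> j \<Longrightarrow> (i = k \<or> j = k) \<Longrightarrow> elim M k $ i $ j = 0"
    "\<And>i j. i \<noteq> j \<Longrightarrow> M $ i $ j = 0 \<Longrightarrow> M $ i $ k = 0 \<or> M $ k $ j = 0
       \<Longrightarrow> elim M k $ i $ j = 0"
proof -
  have sM: "sym_mat M" using pd_sym[OF M] .
  note s = sym_entry[OF sM]
  have kk: "M$k$k > 0" using pd_diag_pos[OF M] .
  define u where "u = (\<chi> i. if i = k then 0 else M$i$k / M$k$k)"
  let ?L = "Lmat u k"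
  have E: "elim M k = ?L ** M ** transpose ?L"
    using elim_eq[OF sM] kk unfolding u_def by simp
  have dL: "det ?L = 1" by (rule det_Lmat) (simp add: u_def)
  show "det (elim M k) = det M" unfolding E by (simp add: det_mul dL)
  have inv: "invertible (transpose ?L)" using dL by (simp add: invertible_det_nz)
  have "x \<bullet> (elim M k *v x) > 0" if "x \<noteq> 0" for x
  proof -
    have y: "transpose ?L *v x \<noteq> 0"
      using that inj_matrix_vector_mult[OF inv] by (metis injD matrix_vector_mult_0_right)
    have "x \<bullet> (elim M k *v x) = x \<bullet> (?L *v (M *v (transpose ?L *v x)))"
      unfolding E by (simp only: matrix_vector_mul_assoc matrix_mul_assoc)
    also have "\<dots> = (x v* ?L) \<bullet> (M *v (transpose ?L *v x))"
      by (simp only: dot_lmul_matrix)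
    also have "\<dots> = (transpose ?L *v x) \<bullet> (M *v (transpose ?L *v x))"
      by (simp only: transpose_matrix_vector)
    finally show ?thesis using pd_pos[OF M y] by simp
  qed
  moreover have "sym_mat (elim M k)"
    unfolding sym_mat_def vec_eq_iff transpose_def
  proof (intro allI)
    fix i j
    show "(\<chi> i j. elim M k $ j $ i) $ i $ j = elim M k $ i $ j"
      using s[of i j] s[of i k] s[of j k] by (simp add: elim_def mult.commute)
  qed
  ultimately show "pos_def (elim M k)" by (simp add: pos_def_def)
  show le: "elim M k $ i $ i \<le> M $ i $ i" for i
    using kk by (auto simp: elim_def s[of k i] field_simps)
  show "elim M k = M \<or> (\<exists>i. elim M k $ i $ i < M $ i $ i)"
  proof (cases "\<exists>i. i \<noteq> k \<and> M$i$k \<noteq> 0")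
    case True
    then obtain i where i: "i \<noteq> k" "M$i$k \<noteq> 0" by blast
    have "M$i$k * M$k$i / M$k$k > 0" using kk i s[of k i] by (auto intro!: divide_pos_pos simp: zero_less_mult_iff)
    hence "elim M k $ i $ i < M $ i $ i" using i by (simp add: elim_def)
    thus ?thesis by blast
  next
    case False
    have "elim M k $ i $ j = M $ i $ j" for i j
      using False s[of k j] by (cases "i = k"; cases "j = k") (auto simp: elim_def)
    hence "elim M k = M" by (simp add: vec_eq_iff)
    thus ?thesis by blast
  qed
  show "\<And>i j. i \<noteq> j \<Longrightarrow> (i = k \<or> j = k) \<Longrightarrow> elim M k $ i $ j = 0"
    by (auto simp: elim_def)
  show "\<And>i j. i \<noteq> j \<Longrightarrow> M $ i $ j = 0 \<Longrightarrow> M $ i $ k = 0 \<or> M $ k $ j = 0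
       \<Longrightarrow> elim M k $ i $ j = 0"
    by (auto simp: elim_def)
qed



lemma had_ind:
  fixes M :: "real^'p^'p"
  assumes J: "finite J" and M: "pos_def M"
  shows "\<exists>M'. pos_def M' \<and> det M' = det M \<and> (\<forall>i. M'$i$i \<le> M$i$i)
    \<and> (\<forall>i j. i \<noteq> j \<and> (i \<in> J \<or> j \<in> J) \<longrightarrow> M'$i$j = 0)
    \<and> (M' = M \<or> (\<exists>i. M'$i$i < M$i$i))"
  using J
proof (induction J rule: finite_induct)
  case empty
  show ?case using M by (intro exI[of _ M]) auto
next
  case (insert k J)
  obtain M1 where H: "pos_def M1 \<and> det M1 = det M \<and> (\<forall>i. M1$i$i \<le> M$i$i)
    \<and> (\<forall>i j. i \<noteq> j \<and> (i \<in> J \<or> j \<in> J) \<longrightarrow> M1$i$j = 0)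
    \<and> (M1 = M \<or> (\<exists>i. M1$i$i < M$i$i))" by (rule exE[OF insert.IH])
  note M1 = H[THEN conjunct1] H[THEN conjunct2, THEN conjunct1]
    H[THEN conjunct2, THEN conjunct2, THEN conjunct1]
    H[THEN conjunct2, THEN conjunct2, THEN conjunct2, THEN conjunct1]
    H[THEN conjunct2, THEN conjunct2, THEN conjunct2, THEN conjunct2]
  note P = elim_props[OF M1(1), where k = k]
  let ?M2 = "elim M1 k"
  have z: "?M2 $ i $ j = 0" if "i \<noteq> j" "i \<in> insert k J \<or> j \<in> insert k J" for i j
  proof (cases "i = k \<or> j = k")
    case True show ?thesis using that(1) True by (rule elim_props(5)[OF M1(1)])
  next
    case False
    hence "i \<in> J \<or> j \<in> J" using that by auto
    hence "M1 $ i $ k = 0 \<or> M1 $ k $ j = 0" using M1(4)[rule_format, of i k] M1(4)[rule_format, of k j] False by auto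
    moreover have "M1 $ i $ j = 0" using M1(4)[rule_format, of i j] that(1) \<open>i \<in> J \<or> j \<in> J\<close> by simp
    ultimately show ?thesis using P(6)[of i j] that(1) by blast
  qed
  have le: "?M2 $ i $ i \<le> M $ i $ i" for i using P(3)[of i] M1(3)[rule_format, of i] by linarith
  have "?M2 = M \<or> (\<exists>i. ?M2$i$i < M$i$i)"
  proof (cases "?M2 = M1")
    case True
    show ?thesis
    proof (cases "M1 = M")
      case True thus ?thesis using \<open>?M2 = M1\<close> by simp
    next
      case False
      then obtain i where "M1$i$i < M$i$i" using M1(5) by blast
      thus ?thesis using \<open>?M2 = M1\<close> by auto
    qed
  next
    case False
    then obtain i where "?M2$i$i < M1$i$i" using P(4) by blast
    hence "?M2$i$i < M$i$i" using M1(3)[rule_format, of i] by linarith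
    thus ?thesis by blast
  qed
  moreover have "pos_def ?M2" "det ?M2 = det M" using P(1,2) M1(2) by auto
  ultimately show ?case using le z by (intro exI[of _ ?M2]) blast
qed



lemma hadamard:
  fixes M :: "real^'p^'p"
  assumes M: "pos_def M"
  shows "det M > 0" "ln (det M) \<le> (\<Sum>i\<in>UNIV. ln (M$i$i))"
    "ln (det M) = (\<Sum>i\<in>UNIV. ln (M$i$i)) \<Longrightarrow> (\<forall>i j. i \<noteq> j \<longrightarrow> M$i$j = 0)"
proof -
  obtain M' where M': "pos_def M'" "det M' = det M" "\<forall>i. M'$i$i \<le> M$i$i"
    "\<forall>i j. i \<noteq> j \<longrightarrow> M'$i$j = 0" "M' = M \<or> (\<exists>i. M'$i$i < M$i$i)"
    using had_ind[OF finite_class.finite_UNIV M] by auto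
  have dpos: "M'$i$i > 0" for i using pd_diag_pos[OF M'(1)] .
  have d: "det M = (\<Prod>i\<in>UNIV. M'$i$i)" using det_diagonal[of M'] M'(2,4) by auto
  show dp: "det M > 0" unfolding d using dpos by (simp add: prod_pos)
  have ld: "ln (det M) = (\<Sum>i\<in>UNIV. ln (M'$i$i))" unfolding d using dpos by (intro ln_prod) (auto simp: less_imp_neq[symmetric])
  have lle: "ln (M'$i$i) \<le> ln (M$i$i)" for i using dpos[of i] M'(3) by (subst ln_le_cancel_iff) (auto intro: order_less_le_trans)
  show "ln (det M) \<le> (\<Sum>i\<in>UNIV. ln (M$i$i))" unfolding ld by (intro sum_mono lle)
  assume eq: "ln (det M) = (\<Sum>i\<in>UNIV. ln (M$i$i))"
  have "M' = M"
  proof (rule ccontr)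
    assume "M' \<noteq> M"
    then obtain i where i: "M'$i$i < M$i$i" using M'(5) by blast
    have "(\<Sum>i\<in>UNIV. ln (M'$i$i)) < (\<Sum>i\<in>UNIV. ln (M$i$i))"
    proof (intro sum_strict_mono_ex1)
      have "ln (M'$i$i) < ln (M$i$i)" using i dpos[of i] by (subst ln_less_cancel_iff) auto
      thus "\<exists>a\<in>UNIV. ln (M'$a$a) < ln (M$a$a)" by blast
    qed (use lle in auto)
    thus False using eq ld by simp
  qed
  thus "\<forall>i j. i \<noteq> j \<longrightarrow> M$i$j = 0" using M'(4) by simp
qed



lemma quad_axis: "axis i 1 \<bullet> (A *v axis i (1::real)) = A $ i $ i"
  unfolding inner_axis' by (simp add: matrix_vector_mult_def axis_def
        mult.commute[of _ "if _ then _ else _"] if_distrib sum.delta cong: if_cong)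

lemma outer_mv: "outer u v *v x = (v \<bullet> x) *\<^sub>R (u :: real^'p)"
  by (simp add: vec_eq_iff outer_def matrix_vector_mult_def inner_vec_def sum_distrib_left
      mult_ac)

lemma mv_sum: "finite K \<Longrightarrow> (\<Sum>k\<in>K. A k) *v x = (\<Sum>k\<in>K. A k *v (x::real^'p))"
  by (induction K rule: finite_induct) (auto simp: matrix_vector_mult_add_rdistrib)

lemma mv_sum_right: "finite K \<Longrightarrow> (A::real^'p^'p) *v (\<Sum>k\<in>K. x k) = (\<Sum>k\<in>K. A *v x k)"
  by (induction K rule: finite_induct) (auto simp: matrix_vector_right_distrib)

lemma trace_scaleR: "trace (c *\<^sub>R (A::real^'p^'p)) = c * trace A"
  by (simp add: trace_def sum_distrib_left)

lemma trace_sum: "finite K \<Longrightarrow> trace (\<Sum>k\<in>K. A k) = (\<Sum>k\<in>K. trace (A k :: real^'p^'p))"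
  unfolding trace_def by (simp add: sum.swap[of _ UNIV])

lemma mm_sum: "finite K \<Longrightarrow> (A::real^'p^'p) ** (\<Sum>k\<in>K. B k) = (\<Sum>k\<in>K. A ** B k)"
  by (induction K rule: finite_induct) (auto simp: matrix_add_ldistrib)

lemma trace_outer: "trace ((A::real^'p^'p) ** outer u v) = (A *v u) \<bullet> v"
proof -
  have "trace (A ** outer u v) = (\<Sum>i\<in>UNIV. \<Sum>k\<in>UNIV. A$i$k * u$k * v$i)"
    by (simp add: trace_def matrix_matrix_mult_def outer_def mult_ac)
  also have "\<dots> = (A *v u) \<bullet> v"
    by (simp add: matrix_vector_mult_def inner_vec_def sum_distrib_right)
  finally show ?thesis .
qed

lemma trace_diag: "trace ((A::real^'p^'p) ** diag_mat s) = (\<Sum>i\<in>UNIV. A$i$i * s i)"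
proof -
  have "(A ** diag_mat s) $ i $ i = A$i$i * s i" for i
    by (simp add: matrix_matrix_mult_def diag_mat_def if_distrib sum.delta cong: if_cong)
  thus ?thesis by (simp add: trace_def)
qed

lemma trace_diag_mat: "trace (diag_mat s) = (\<Sum>i\<in>UNIV. s i)"
  by (simp add: trace_def diag_mat_def)

lemma diag_mult: "diag_mat a ** diag_mat b = diag_mat (\<lambda>i. a i * b i)"
proof -
  have "(diag_mat a ** diag_mat b) $ i $ j = diag_mat (\<lambda>i. a i * b i) $ i $ j" for i j
  proof -
    have "(diag_mat a ** diag_mat b) $ i $ j = (\<Sum>k\<in>UNIV. if k = i then (if i = j then a i * b i else 0) else 0)"
      unfolding matrix_matrix_mult_def diag_mat_def by (simp only: vec_lambda_beta, rule sum.cong) auto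
    also have "\<dots> = diag_mat (\<lambda>i. a i * b i) $ i $ j" by (simp add: diag_mat_def)
    finally show ?thesis .
  qed
  thus ?thesis by (simp add: vec_eq_iff)
qed

lemma diag_mv: "diag_mat a *v x = (\<chi> i. a i * x $ i)"
proof -
  have "(diag_mat a *v x) $ i = a i * x $ i" for i
  proof -
    have "(diag_mat a *v x) $ i = (\<Sum>k\<in>UNIV. if k = i then a i * x $ i else 0)"
      unfolding matrix_vector_mult_def diag_mat_def by (simp only: vec_lambda_beta, rule sum.cong) auto
    also have "\<dots> = a i * x $ i" by simp
    finally show ?thesis .
  qed
  thus ?thesis by (simp add: vec_eq_iff)
qed

lemma mat_pow_diag: "mat_pow (diag_mat a) k = diag_mat (\<lambda>i. a i ^ k)"
proof (induction k)
  case 0 thus ?case by (simp add: diag_mat_def mat_def vec_eq_iff)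
next
  case (Suc k) thus ?case by (simp add: mat_pow_Suc diag_mult)
qed

lemma diag_one: "diag_mat (\<lambda>i. 1) = mat 1"
  by (simp add: diag_mat_def mat_def vec_eq_iff)

lemma det_diag_mat: "det (diag_mat a) = (\<Prod>i\<in>UNIV. a i)"
  by (subst det_diagonal) (auto simp: diag_mat_def)

lemma pd_diag: "(\<And>i. a i > 0) \<Longrightarrow> pos_def (diag_mat a)"
proof -
  assume a: "\<And>i. a i > 0"
  have "x \<bullet> (diag_mat a *v x) = (\<Sum>i\<in>UNIV. a i * (x$i)^2)" for x
    by (simp add: inner_vec_def diag_mv power2_eq_square mult_ac)
  moreover have "(\<Sum>i\<in>UNIV. a i * (x$i)^2) > 0" if x0: "x \<noteq> 0" for x :: "real^'a"
  proof -
    obtain j where j: "x $ j \<noteq> 0" using x0 by (metis vec_eq_iff zero_index)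
    show ?thesis
    proof (rule sum_pos2[where i=j])
      show "0 < a j * (x $ j)\<^sup>2" using a[of j] j by simp
    qed (auto intro!: mult_nonneg_nonneg simp: a[THEN less_imp_le])
  qed
  moreover have "sym_mat (diag_mat a)" by (simp add: sym_mat_def diag_mat_def vec_eq_iff transpose_def)
  ultimately show ?thesis by (simp add: pos_def_def)
qed

lemma pd_congr:
  fixes A V :: "real^'p^'p"
  assumes A: "pos_def A" and V: "orthogonal_matrix V"
  shows "pos_def (transpose V ** A ** V)"
proof -
  have sym: "sym_mat (transpose V ** A ** V)"
    using pd_sym[OF A] by (simp add: sym_mat_def matrix_transpose_mul matrix_mul_assoc)
  have inv: "invertible V" using V by (auto simp: orthogonal_matrix_def invertible_def)
  have "x \<bullet> ((transpose V ** A ** V) *v x) > 0" if "x \<noteq> 0" for x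
  proof -
    have y: "V *v x \<noteq> 0"
      using that inj_matrix_vector_mult[OF inv] by (metis injD matrix_vector_mult_0_right)
    have "x \<bullet> ((transpose V ** A ** V) *v x) = x \<bullet> (transpose V *v (A *v (V *v x)))"
      by (simp only: matrix_vector_mul_assoc matrix_mul_assoc)
    also have "\<dots> = (V *v x) \<bullet> (A *v (V *v x))"
      by (metis dot_lmul_matrix transpose_transpose vector_transpose_matrix)
    finally show ?thesis using pd_pos[OF A y] by simp
  qed
  thus ?thesis using sym by (simp add: pos_def_def)
qed

lemma orth_det: "orthogonal_matrix (V::real^'p^'p) \<Longrightarrow> det (transpose V ** A ** V) = det A"
proof -
  assume V: "orthogonal_matrix V"
  have "det V * det V = 1" using det_orthogonal_matrix[OF V] by auto
  thus ?thesis by (simp add: det_mul)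
qed

lemma orth_trace: "orthogonal_matrix (V::real^'p^'p) \<Longrightarrow> trace (transpose V ** A ** V) = trace A"
proof -
  assume V: "orthogonal_matrix V"
  have "trace (transpose V ** A ** V) = trace (transpose V ** (A ** V))"
    by (simp add: matrix_mul_assoc)
  also have "\<dots> = trace ((A ** V) ** transpose V)" by (rule trace_mul_sym)
  also have "\<dots> = trace A" using V by (simp add: orthogonal_matrix_def matrix_mul_assoc[symmetric])
  finally show ?thesis .
qed

lemma orth_pow: "orthogonal_matrix (V::real^'p^'p) \<Longrightarrow>
   mat_pow (transpose V ** A ** V) k = transpose V ** mat_pow A k ** V"
proof (induction k)
  case 0 thus ?case by (simp add: orthogonal_matrix_def)
next
  case (Suc k)
  have "mat_pow (transpose V ** A ** V) (Suc k) = (transpose V ** A ** V) ** (transpose V ** mat_pow A k ** V)"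
    using Suc by (simp add: mat_pow_Suc)
  also have "\<dots> = transpose V ** A ** (V ** transpose V) ** mat_pow A k ** V"
    by (simp add: matrix_mul_assoc)
  also have "\<dots> = transpose V ** mat_pow A (Suc k) ** V"
    using Suc.prems by (simp add: orthogonal_matrix_def mat_pow_Suc matrix_mul_assoc)
  finally show ?case .
qed

lemma mat_pow_scaleR: "mat_pow (c *\<^sub>R (A::real^'p^'p)) k = (c ^ k) *\<^sub>R mat_pow A k"
proof (induction k)
  case 0 thus ?case by simp
next
  case (Suc k) thus ?case by (simp add: mat_pow_Suc matrix_scalar_ac scalar_matrix_assoc[symmetric])
qed



lemma ln_strict:
  fixes x :: real assumes "x > 0" "x \<noteq> 1" shows "ln x < x - 1"
proof -
  have sx: "sqrt x > 0" using assms by simp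
  have "ln x = 2 * ln (sqrt x)" using assms by (simp add: ln_sqrt)
  also have "\<dots> \<le> 2 * (sqrt x - 1)" using ln_le_minus_one[OF sx] by simp
  also have "\<dots> < x - 1"
  proof -
    have "sqrt x \<noteq> 1" using assms by auto
    hence "(sqrt x - 1)^2 > 0" by simp
    thus ?thesis using assms by (simp add: power2_eq_square algebra_simps)
  qed
  finally show ?thesis .
qed

lemma phi_max:
  fixes t d Nn b c :: real and q :: nat
  assumes t: "t > 0" and d: "d > 0" and Nn: "Nn > 0" and c: "c > 0" and q: "q \<ge> 1"
    and crit: "Nn / d - b - real q * c * d ^ (q - 1) = 0"
  shows "Nn * ln t - b * t - c * t ^ q \<le> Nn * ln d - b * d - c * d ^ q"
    and "Nn * ln t - b * t - c * t ^ q = Nn * ln d - b * d - c * d ^ q \<Longrightarrow> t = d"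
proof -
  have lnq: "ln t = ln d + ln (t / d)" using t d by (simp add: ln_div)
  have A: "Nn * ln t \<le> Nn * ln d + Nn * (t - d) / d"
  proof -
    have "ln (t / d) \<le> t / d - 1" using t d by (intro ln_le_minus_one) simp
    also have "t / d - 1 = (t - d) / d" using d by (simp add: field_simps)
    finally have "Nn * ln (t / d) \<le> Nn * ((t - d) / d)" using Nn by (intro mult_left_mono) auto
    thus ?thesis using lnq by (simp add: algebra_simps)
  qed
  have As: "Nn * ln t < Nn * ln d + Nn * (t - d) / d" if "t \<noteq> d"
  proof -
    have "ln (t / d) < t / d - 1" using t d that by (intro ln_strict) auto
    also have "t / d - 1 = (t - d) / d" using d by (simp add: field_simps)
    finally have "Nn * ln (t / d) < Nn * ((t - d) / d)" using Nn by (intro mult_strict_left_mono) auto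
    thus ?thesis using lnq by (simp add: algebra_simps)
  qed
  have B: "c * t ^ q \<ge> c * d ^ q + real q * c * d ^ (q - 1) * (t - d)"
  proof -
    have "1 + real q * (t / d - 1) \<le> (1 + (t / d - 1)) ^ q"
      using t d by (intro Bernoulli_inequality) simp
    hence "1 + real q * (t / d - 1) \<le> t ^ q / d ^ q" by (simp add: power_divide)
    hence "d ^ q * (1 + real q * (t / d - 1)) \<le> t ^ q" using d by (simp add: field_simps)
    moreover have "d ^ q * (1 + real q * (t / d - 1)) = d ^ q + real q * d ^ (q - 1) * (t - d)"
      using d q pow_split[of q d] by (simp add: field_simps)
    ultimately have "d ^ q + real q * d ^ (q - 1) * (t - d) \<le> t ^ q" by simp
    hence "c * (d ^ q + real q * d ^ (q - 1) * (t - d)) \<le> c * t ^ q"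
      using c by (intro mult_left_mono) auto
    thus ?thesis by (simp add: algebra_simps)
  qed
  have C: "Nn * (t - d) / d - b * (t - d) - real q * c * d ^ (q - 1) * (t - d) = 0"
    using arg_cong[OF crit, of "\<lambda>z. z * (t - d)"] by (simp add: algebra_simps)
  show "Nn * ln t - b * t - c * t ^ q \<le> Nn * ln d - b * d - c * d ^ q"
    using A B C by (simp add: algebra_simps)
  show "t = d" if "Nn * ln t - b * t - c * t ^ q = Nn * ln d - b * d - c * d ^ q"
  proof (rule ccontr)
    assume "t \<noteq> d"
    thus False using As B C that by (simp add: algebra_simps)
  qed
qed

lemma G_max:
  fixes M :: "real^'p^'p" and b d :: "'p \<Rightarrow> real" and Nn c :: real and q :: nat
  assumes M: "pos_def M" and Nn: "Nn > 0" and c: "c > 0" and q: "q \<ge> 1"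
    and d: "\<And>i. d i > 0" and crit: "\<And>i. Nn / d i - b i - real q * c * d i ^ (q - 1) = 0"
  shows "Nn * ln (det M) - (\<Sum>i\<in>UNIV. M$i$i * b i) - c * trace (mat_pow M q)
       \<le> (\<Sum>i\<in>UNIV. Nn * ln (d i) - b i * d i - c * d i ^ q)"
    and "Nn * ln (det M) - (\<Sum>i\<in>UNIV. M$i$i * b i) - c * trace (mat_pow M q)
       = (\<Sum>i\<in>UNIV. Nn * ln (d i) - b i * d i - c * d i ^ q) \<Longrightarrow> M = diag_mat d"
proof -
  define phi where "phi i t = Nn * ln t - b i * t - c * t ^ q" for i t
  have mpos: "M$i$i > 0" for i using pd_diag_pos[OF M] .
  have h1: "ln (det M) \<le> (\<Sum>i\<in>UNIV. ln (M$i$i))" using hadamard(2)[OF M] .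
  have h2: "(\<Sum>i\<in>UNIV. (M$i$i)^q) \<le> trace (mat_pow M q)"
    unfolding trace_def by (intro sum_mono diag_pow_ge[OF M])
  have h3: "phi i (M$i$i) \<le> phi i (d i)" for i
    unfolding phi_def using phi_max(1)[OF mpos d Nn c q crit] .
  have ex: "(\<Sum>i\<in>UNIV. phi i (M$i$i))
      = Nn * (\<Sum>i\<in>UNIV. ln (M$i$i)) - (\<Sum>i\<in>UNIV. M$i$i * b i) - c * (\<Sum>i\<in>UNIV. (M$i$i)^q)"
    by (simp add: phi_def sum_subtractf sum_distrib_left mult.commute)
  have ed: "(\<Sum>i\<in>UNIV. Nn * ln (d i) - b i * d i - c * d i ^ q) = (\<Sum>i\<in>UNIV. phi i (d i))"
    by (simp add: phi_def)
  have S: "(\<Sum>i\<in>UNIV. phi i (M$i$i)) \<le> (\<Sum>i\<in>UNIV. phi i (d i))" by (intro sum_mono h3)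
  have T1: "Nn * ln (det M) \<le> Nn * (\<Sum>i\<in>UNIV. ln (M$i$i))" using h1 Nn by simp
  have T2: "c * (\<Sum>i\<in>UNIV. (M$i$i)^q) \<le> c * trace (mat_pow M q)" using h2 c by simp
  show "Nn * ln (det M) - (\<Sum>i\<in>UNIV. M$i$i * b i) - c * trace (mat_pow M q)
       \<le> (\<Sum>i\<in>UNIV. Nn * ln (d i) - b i * d i - c * d i ^ q)"
    using S T1 T2 ex ed by linarith
  assume eq: "Nn * ln (det M) - (\<Sum>i\<in>UNIV. M$i$i * b i) - c * trace (mat_pow M q)
       = (\<Sum>i\<in>UNIV. Nn * ln (d i) - b i * d i - c * d i ^ q)"
  have "Nn * ln (det M) = Nn * (\<Sum>i\<in>UNIV. ln (M$i$i))"
    using S T1 T2 ex ed eq by linarith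
  hence "ln (det M) = (\<Sum>i\<in>UNIV. ln (M$i$i))" using Nn by simp
  hence off: "\<forall>i j. i \<noteq> j \<longrightarrow> M$i$j = 0" using hadamard(3)[OF M] by blast
  have diag: "M$i$i = d i" for i
  proof (rule ccontr)
    assume ne: "M$i$i \<noteq> d i"
    have "phi i (M$i$i) < phi i (d i)"
      using h3[of i] phi_max(2)[OF mpos[of i] d[of i] Nn c q crit[of i]] ne unfolding phi_def by fastforce
    hence "(\<Sum>i\<in>UNIV. phi i (M$i$i)) < (\<Sum>i\<in>UNIV. phi i (d i))"
      by (intro sum_strict_mono_ex1) (auto intro: h3)
    thus False using S T1 T2 ex ed eq by linarith
  qed
  show "M = diag_mat d"
    using off diag by (auto simp: vec_eq_iff diag_mat_def)
qed



lemma pd_scalar: "c > 0 \<Longrightarrow> pos_def (c *\<^sub>R (mat 1 :: real^'p^'p))"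
  by (simp add: pos_def_def sym_mat_def transpose_scalar scaleR_matrix_vector_assoc[symmetric])

lemma sqrt_I:
  fixes alpha :: real assumes a: "alpha > 0"
  shows "mat_sqrt (alpha *\<^sub>R (mat 1 :: real^'p^'p)) = sqrt alpha *\<^sub>R mat 1"
  unfolding mat_sqrt_def
proof (rule the_equality)
  show "pos_def (sqrt alpha *\<^sub>R (mat 1 :: real^'p^'p)) \<and>
      (sqrt alpha *\<^sub>R mat 1) ** (sqrt alpha *\<^sub>R mat 1) = alpha *\<^sub>R (mat 1 :: real^'p^'p)"
    using a by (simp add: pd_scalar matrix_scalar_ac scalar_matrix_assoc[symmetric])
next
  fix R :: "real^'p^'p"
  assume R: "pos_def R \<and> R ** R = alpha *\<^sub>R mat 1"
  let ?r = "sqrt alpha"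
  have r: "?r > 0" "?r * ?r = alpha" using a by auto
  have "R *v y = ?r *\<^sub>R y" for y
  proof -
    define z where "z = R *v y - ?r *\<^sub>R y"
    have RR: "R *v (R *v y) = alpha *\<^sub>R y"
      using R by (simp add: matrix_vector_mul_assoc scaleR_matrix_vector_assoc[symmetric])
    have "R *v z + ?r *\<^sub>R z = 0"
      unfolding z_def using RR r
      by (simp add: matrix_vector_mult_diff_distrib matrix_vector_mult_scaleR algebra_simps)
    hence "z \<bullet> (R *v z) + ?r * (z \<bullet> z) = 0"
      by (metis inner_add_right inner_scaleR_right inner_zero_right)
    moreover have "z \<bullet> (R *v z) \<ge> 0" using pd_pos[of R z] R by (cases "z = 0") auto
    ultimately have "?r * (z \<bullet> z) \<le> 0" by linarith
    hence "z \<bullet> z \<le> 0" using r(1) by (simp add: mult_le_0_iff)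
    hence "z = 0" by (metis inner_eq_zero_iff order_antisym inner_ge_zero)
    thus ?thesis unfolding z_def by simp
  qed
  thus "R = ?r *\<^sub>R mat 1"
    by (simp add: matrix_eq scaleR_matrix_vector_assoc[symmetric])
qed

lemma psd_S:
  fixes X :: "nat \<Rightarrow> real^'p"
  assumes n: "n \<ge> 1"
  shows "x \<bullet> (sample_cov n X *v x) \<ge> 0"
proof -
  define y where "y k = X k - sample_mean n X" for k
  have "sample_cov n X *v x = (1 / real n) *\<^sub>R (\<Sum>k<n. (y k \<bullet> x) *\<^sub>R y k)"
    unfolding sample_cov_def y_def[symmetric]
    by (simp add: scaleR_matrix_vector_assoc[symmetric] mv_sum outer_mv)
  hence "x \<bullet> (sample_cov n X *v x) = (1 / real n) * (\<Sum>k<n. (y k \<bullet> x) * (x \<bullet> y k))"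
    by (simp add: inner_sum_right)
  also have "\<dots> \<ge> 0"
  proof -
    have "(\<Sum>k<n. (y k \<bullet> x) * (x \<bullet> y k)) \<ge> 0"
      by (intro sum_nonneg) (simp add: inner_commute[of x])
    thus ?thesis by simp
  qed
  finally show ?thesis .
qed

lemma lik_decomp:
  fixes X :: "nat \<Rightarrow> real^'p" and Om :: "real^'p^'p"
  assumes n: "n \<ge> 1" and sOm: "sym_mat Om"
  shows "(\<Sum>i<n. (X i - mu) \<bullet> (Om *v (X i - mu)))
     = real n * trace (Om ** sample_cov n X)
       + real n * ((sample_mean n X - mu) \<bullet> (Om *v (sample_mean n X - mu)))"
proof -
  define xb where "xb = sample_mean n X"
  define y where "y k = X k - xb" for k
  define z where "z = xb - mu"
  have sy: "(\<Sum>k<n. y k) = 0"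
  proof -
    have "(\<Sum>k<n. y k) = (\<Sum>k<n. X k) - real n *\<^sub>R xb"
      by (simp only: y_def sum_subtractf sum_constant_scaleR card_lessThan)
    also have "real n *\<^sub>R xb = (\<Sum>k<n. X k)" using n by (simp add: xb_def sample_mean_def)
    finally show ?thesis by simp
  qed
  have e: "(y k + z) \<bullet> (Om *v (y k + z)) = y k \<bullet> (Om *v y k) + 2 * (z \<bullet> (Om *v y k)) + z \<bullet> (Om *v z)" for k
  proof -
    have "y k \<bullet> (Om *v z) = z \<bullet> (Om *v y k)"
      using sym_dot[OF sOm, of "y k" z] by (simp add: inner_commute)
    thus ?thesis by (simp add: matrix_vector_right_distrib inner_add_left inner_add_right)
  qed
  have "(\<Sum>i<n. (X i - mu) \<bullet> (Om *v (X i - mu))) = (\<Sum>k<n. (y k + z) \<bullet> (Om *v (y k + z)))"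
    by (simp add: y_def z_def)
  also have "\<dots> = (\<Sum>k<n. y k \<bullet> (Om *v y k)) + 2 * (z \<bullet> (Om *v (\<Sum>k<n. y k))) + real n * (z \<bullet> (Om *v z))"
    by (simp add: e sum.distrib sum_distrib_left mv_sum_right inner_sum_right)
  also have "(\<Sum>k<n. y k \<bullet> (Om *v y k)) = real n * trace (Om ** sample_cov n X)"
  proof -
    have "trace (Om ** sample_cov n X) = (1 / real n) * (\<Sum>k<n. trace (Om ** outer (y k) (y k)))"
    proof -
      have sc: "Om ** (c *\<^sub>R B) = c *\<^sub>R (Om ** B)" for c and B :: "real^'p^'p"
        by (simp add: matrix_scalar_ac scalar_matrix_assoc)
      show ?thesis
        unfolding sample_cov_def xb_def[symmetric] y_def[symmetric] sc trace_scaleR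
        by (simp add: mm_sum trace_sum)
    qed
    also have "\<dots> = (1 / real n) * (\<Sum>k<n. y k \<bullet> (Om *v y k))"
      by (simp add: trace_outer sym_dot[OF sOm])
    finally show ?thesis using n by simp
  qed
  finally show ?thesis using sy by (simp add: xb_def z_def)
qed



lemma obj_formula:
  fixes X :: "nat \<Rightarrow> real^'p" and Sg :: "real^'p^'p" and alpha m N :: real and q n :: nat
  assumes n: "n \<ge> 1" and a: "alpha > 0" and Sg: "pos_def Sg"
    and N: "N = real n + real CARD('p) + real q * m + 1"
  shows "map_objective n X (alpha *\<^sub>R mat 1) m q mu Sg
    = exp ((N * ln (det (matrix_inv Sg)) - real n * trace (matrix_inv Sg ** sample_cov n X)
          - alpha ^ q * trace (mat_pow (matrix_inv Sg) q)
          - real n * ((sample_mean n X - mu) \<bullet> (matrix_inv Sg *v (sample_mean n X - mu)))) / 2)"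
proof -
  define Om where "Om = matrix_inv Sg"
  let ?r = "sqrt alpha"
  have r: "?r > 0" "?r * ?r = alpha" using a by auto
  have I: "Sg ** Om = mat 1" "Om ** Sg = mat 1"
    using inv_props[OF pd_invertible[OF Sg]] by (auto simp: Om_def)
  have Ri: "matrix_inv (mat_sqrt (alpha *\<^sub>R (mat 1 :: real^'p^'p))) = (1 / ?r) *\<^sub>R mat 1"
    unfolding sqrt_I[OF a] using r
    by (intro inv_unique) (simp add: matrix_scalar_ac scalar_matrix_assoc[symmetric])
  have RSR: "((1 / ?r) *\<^sub>R mat 1) ** Sg ** ((1 / ?r) *\<^sub>R (mat 1 :: real^'p^'p)) = (1 / alpha) *\<^sub>R Sg"
    using r by (simp add: matrix_scalar_ac scalar_matrix_assoc[symmetric])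
  have inv2: "matrix_inv ((1 / alpha) *\<^sub>R Sg) = alpha *\<^sub>R Om"
    using a I by (intro inv_unique) (simp add: matrix_scalar_ac scalar_matrix_assoc[symmetric])
  have tr: "trace (mat_pow (alpha *\<^sub>R Om) q) = alpha ^ q * trace (mat_pow Om q)"
    by (simp add: mat_pow_scaleR trace_scaleR)
  have dpos: "det Sg > 0" using hadamard(1)[OF Sg] .
  have "det Sg * det Om = 1" using arg_cong[OF I(1), of det] by (simp add: det_mul)
  hence "det Om = 1 / det Sg" using dpos by (simp add: field_simps)
  hence lnd: "ln (det Sg) = - ln (det Om)" using dpos by (simp add: ln_div)
  have sOm: "sym_mat Om" using pd_sym[OF pd_inv[OF Sg]] by (simp add: Om_def)
  note L = lik_decomp[OF n sOm, of X mu]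
  have "map_objective n X (alpha *\<^sub>R mat 1) m q mu Sg
     = exp ((- real n / 2) * ln (det Sg))
       * exp (- (1/2) * (\<Sum>i<n. (X i - mu) \<bullet> (Om *v (X i - mu))))
       * exp (- (1/2) * (alpha ^ q * trace (mat_pow Om q)))
       * exp ((- (real q * m + real CARD('p) + 1) / 2) * ln (det Sg))"
    unfolding map_objective_def Let_def Ri RSR inv2 tr Om_def[symmetric]
    using dpos by (simp add: powr_def)
  also have "\<dots> = exp ((- real n / 2) * ln (det Sg)
       + (- (1/2) * (\<Sum>i<n. (X i - mu) \<bullet> (Om *v (X i - mu))))
       + (- (1/2) * (alpha ^ q * trace (mat_pow Om q)))
       + ((- (real q * m + real CARD('p) + 1) / 2) * ln (det Sg)))"
    by (simp only: exp_add)
  also have "\<dots> = exp ((N * ln (det Om) - real n * trace (Om ** sample_cov n X)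
          - alpha ^ q * trace (mat_pow Om q)
          - real n * ((sample_mean n X - mu) \<bullet> (Om *v (sample_mean n X - mu)))) / 2)"
    unfolding L lnd N by (simp add: field_simps)
  finally show ?thesis by (simp add: Om_def)
qed



lemma crit_from_eq:
  fixes N alpha s mu :: real and n q :: nat
  assumes q: "q \<ge> 1" and mu: "mu > 0" and e: "mu_eq N n q alpha s mu"
  shows "N / (1 / mu) - real n * s - real q * alpha ^ q * (1 / mu) ^ (q - 1) = 0"
proof -
  have p: "mu ^ (q - 1) > 0" using mu by simp
  have "mu ^ (q - 1) * (N / (1 / mu) - real n * s - real q * alpha ^ q * (1 / mu) ^ (q - 1))
      = N * mu ^ q - real n * s * mu ^ (q - 1) - real q * alpha ^ q"
    using p pow_split[of q mu] q mu by (simp add: power_one_over field_simps)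
  also have "\<dots> = 0" using e by (simp add: mu_eq_def)
  finally show ?thesis using p mu by simp
qed

lemma map_part:
  fixes X :: "nat \<Rightarrow> real^'p" and V :: "real^'p^'p" and s mu :: "'p \<Rightarrow> real"
    and alpha m N :: real and q n :: nat
  assumes n: "n \<ge> 1" and q: "q \<ge> 1" and a: "alpha > 0"
    and N: "N = real n + real CARD('p) + real q * m + 1" and Npos: "N > 0"
    and V: "orthogonal_matrix V" and S: "sample_cov n X = V ** diag_mat s ** transpose V"
    and mu: "\<And>i. mu i > 0" and mueq: "\<And>i. mu_eq N n q alpha (s i) (mu i)"
  shows "is_MAP_Sigma n X (alpha *\<^sub>R mat 1) m q (V ** diag_mat mu ** transpose V)"
proof -
  define d where "d i = 1 / mu i" for i
  define Sh where "Sh = V ** diag_mat mu ** transpose V"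
  define Dh where "Dh = V ** diag_mat d ** transpose V"
  define b where "b i = real n * s i" for i
  define F where "F Om = N * ln (det Om) - real n * trace (Om ** sample_cov n X)
          - alpha ^ q * trace (mat_pow Om q)" for Om :: "real^'p^'p"
  have dpos: "d i > 0" for i using mu[of i] by (simp add: d_def)
  have VV: "transpose V ** V = mat 1" "V ** transpose V = mat 1"
    using V by (auto simp: orthogonal_matrix_def)
  have aq: "alpha ^ q > 0" using a by simp
  have crit: "N / d i - b i - real q * alpha ^ q * d i ^ (q - 1) = 0" for i
    using crit_from_eq[OF q mu[of i] mueq[of i]] by (simp add: d_def b_def)
  have Shpd: "pos_def Sh"
  proof -
    have "pos_def (transpose (transpose V) ** diag_mat mu ** transpose V)"
      using pd_congr[OF pd_diag[OF mu], of "transpose V"] V by simp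
    thus ?thesis by (simp add: Sh_def)
  qed
  have ShDh: "Sh ** Dh = mat 1"
  proof -
    have "Sh ** Dh = V ** diag_mat mu ** (transpose V ** V) ** diag_mat d ** transpose V"
      by (simp add: Sh_def Dh_def matrix_mul_assoc)
    also have "\<dots> = V ** (diag_mat mu ** diag_mat d) ** transpose V"
      by (simp add: VV matrix_mul_assoc)
    also have "diag_mat mu ** diag_mat d = mat 1"
    proof -
      have "(\<lambda>i. mu i * d i) = (\<lambda>i. 1)" using mu by (auto simp: d_def fun_eq_iff less_imp_neq[symmetric])
      thus ?thesis by (simp add: diag_mult diag_one)
    qed
    finally show ?thesis using VV by simp
  qed
  have invSh: "matrix_inv Sh = Dh" using inv_unique[OF ShDh] .
  have DhSh: "Dh ** Sh = mat 1" using ShDh matrix_left_right_inverse by blast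
  have Frot: "F Om = N * ln (det (transpose V ** Om ** V))
       - (\<Sum>i\<in>UNIV. (transpose V ** Om ** V)$i$i * b i)
       - alpha ^ q * trace (mat_pow (transpose V ** Om ** V) q)" for Om
  proof -
    have t1: "trace (Om ** sample_cov n X) = (\<Sum>i\<in>UNIV. (transpose V ** Om ** V)$i$i * s i)"
    proof -
      have "trace (Om ** sample_cov n X) = trace ((Om ** V ** diag_mat s) ** transpose V)"
        unfolding S by (simp add: matrix_mul_assoc)
      also have "\<dots> = trace (transpose V ** (Om ** V ** diag_mat s))" by (rule trace_mul_sym)
      also have "\<dots> = trace ((transpose V ** Om ** V) ** diag_mat s)" by (simp add: matrix_mul_assoc)
      finally show ?thesis by (simp add: trace_diag)
    qed
    have "real n * (\<Sum>i\<in>UNIV. (transpose V ** Om ** V)$i$i * s i)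
        = (\<Sum>i\<in>UNIV. (transpose V ** Om ** V)$i$i * b i)"
      by (simp add: b_def sum_distrib_left mult_ac)
    thus ?thesis
      unfolding F_def t1 orth_det[OF V] orth_pow[OF V] orth_trace[OF V] by simp
  qed
  have Drot: "transpose V ** Dh ** V = diag_mat d"
    by (simp add: Dh_def matrix_mul_assoc VV) (simp add: matrix_mul_assoc[symmetric] VV)
  have FD: "F Dh = (\<Sum>i\<in>UNIV. N * ln (d i) - b i * d i - alpha ^ q * d i ^ q)"
  proof -
    have "ln (det (diag_mat d)) = (\<Sum>i\<in>UNIV. ln (d i))"
      unfolding det_diag_mat using dpos by (intro ln_prod) (auto simp: less_imp_neq[symmetric])
    moreover have "trace (mat_pow (diag_mat d) q) = (\<Sum>i\<in>UNIV. d i ^ q)"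
      by (simp add: mat_pow_diag trace_diag_mat)
    moreover have "(diag_mat d) $ i $ i = d i" for i by (simp add: diag_mat_def)
    ultimately show ?thesis
      unfolding Frot Drot by (simp add: sum_subtractf sum_distrib_left mult_ac)
  qed
  have K: "F Om \<le> F Dh \<and> (F Om = F Dh \<longrightarrow> Om = Dh)" if Om: "pos_def Om" for Om
  proof -
    let ?M = "transpose V ** Om ** V"
    have Mpd: "pos_def ?M" using pd_congr[OF Om V] .
    note G = G_max[OF Mpd Npos aq q dpos crit]
    have "F Om \<le> F Dh" unfolding FD Frot[of Om] using G(1) .
    moreover have "Om = Dh" if "F Om = F Dh"
    proof -
      have "?M = diag_mat d" using G(2) that unfolding FD Frot[of Om] by simp
      hence "V ** ?M ** transpose V = Dh" by (simp add: Dh_def)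
      moreover have "V ** ?M ** transpose V = Om"
        by (simp add: matrix_mul_assoc VV) (simp add: matrix_mul_assoc[symmetric] VV)
      ultimately show ?thesis by simp
    qed
    ultimately show ?thesis by blast
  qed
  define xb where "xb = sample_mean n X"
  have objSh: "map_objective n X (alpha *\<^sub>R mat 1) m q xb Sh = exp (F Dh / 2)"
    unfolding obj_formula[OF n a Shpd N] invSh by (simp add: F_def xb_def)
  have objSg: "map_objective n X (alpha *\<^sub>R mat 1) m q mu' Sg
     = exp ((F (matrix_inv Sg) - real n * ((xb - mu') \<bullet> (matrix_inv Sg *v (xb - mu')))) / 2)"
    if "pos_def Sg" for mu' and Sg :: "real^'p^'p"
    unfolding obj_formula[OF n a that N] by (simp add: F_def xb_def)
  show ?thesis
    unfolding is_MAP_Sigma_def Sh_def[symmetric]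
  proof (intro exI[of _ xb] conjI allI impI)
    show "pos_def Sh" by (rule Shpd)
  next
    fix mu' and Sg :: "real^'p^'p" assume Sg: "pos_def Sg"
    have Q: "(xb - mu') \<bullet> (matrix_inv Sg *v (xb - mu')) \<ge> 0"
      using pd_pos[OF pd_inv[OF Sg], of "xb - mu'"] by (cases "xb - mu' = 0") auto
    have "F (matrix_inv Sg) \<le> F Dh" using K[OF pd_inv[OF Sg]] by blast
    hence "(F (matrix_inv Sg) - real n * ((xb - mu') \<bullet> (matrix_inv Sg *v (xb - mu')))) / 2 \<le> F Dh / 2"
    proof -
      have "real n * ((xb - mu') \<bullet> (matrix_inv Sg *v (xb - mu'))) \<ge> 0" using Q by simp
      thus ?thesis using \<open>F (matrix_inv Sg) \<le> F Dh\<close> by (intro divide_right_mono) auto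
    qed
    thus "map_objective n X (alpha *\<^sub>R mat 1) m q mu' Sg \<le> map_objective n X (alpha *\<^sub>R mat 1) m q xb Sh"
      unfolding objSg[OF Sg] objSh by simp
  next
    fix mu' and Sg :: "real^'p^'p" assume H: "pos_def Sg \<and> map_objective n X (alpha *\<^sub>R mat 1) m q mu' Sg
        = map_objective n X (alpha *\<^sub>R mat 1) m q xb Sh"
    hence Sg: "pos_def Sg" by blast
    let ?Q = "(xb - mu') \<bullet> (matrix_inv Sg *v (xb - mu'))"
    have Q: "?Q \<ge> 0"
      using pd_pos[OF pd_inv[OF Sg], of "xb - mu'"] by (cases "xb - mu' = 0") auto
    have e: "F (matrix_inv Sg) - real n * ?Q = F Dh"
      using H unfolding objSg[OF Sg] objSh by simp
    have le: "F (matrix_inv Sg) \<le> F Dh" using K[OF pd_inv[OF Sg]] by blast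
    have "real n * ?Q \<le> 0" using e le by linarith
    hence "?Q \<le> 0" using n by (simp add: mult_le_0_iff)
    hence "xb - mu' = 0"
      using pd_pos[OF pd_inv[OF Sg], of "xb - mu'"] by (cases "xb - mu' = 0") auto
    thus "mu' = xb" by simp
    have "F (matrix_inv Sg) = F Dh" using e Q le n by (smt (verit) mult_nonneg_nonneg of_nat_0_le_iff)
    hence OD: "matrix_inv Sg = Dh" using K[OF pd_inv[OF Sg]] by blast
    have "Sg ** matrix_inv Sg = mat 1" using inv_props[OF pd_invertible[OF Sg]] by simp
    hence SD: "Sg ** Dh = mat 1" using OD by simp
    have "Sg = Sg ** (Dh ** Sh)" using DhSh by simp
    also have "\<dots> = (Sg ** Dh) ** Sh" by (simp add: matrix_mul_assoc)
    also have "\<dots> = Sh" using SD by simp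
    finally show "Sg = Sh" .
  qed
qed



theorem mainTheorem6:
  fixes n :: nat and X :: "nat \<Rightarrow> real^'p" and m :: real and q :: nat and alpha :: real
    and N :: real
  assumes "n \<ge> 1" and "m \<ge> real CARD('p)" and "q \<ge> 1" and "alpha > 0"
    and "N = real n + real CARD('p) + real q * m + 1"
  shows "(\<forall>s\<ge>0. \<exists>!x. x > 0 \<and> mu_eq N n q alpha s x)
    \<and> (\<forall>V s. orthogonal_matrix V \<and> sample_cov n X = V ** diag_mat s ** transpose V \<longrightarrow>
         is_MAP_Sigma n X (alpha *\<^sub>R mat 1) m q
           (V ** diag_mat (\<lambda>i. mu_q N n q alpha (s i)) ** transpose V))
    \<and> mu_q N n q alpha 0 = alpha * (real q / N) powr (1 / real q)
    \<and> (\<forall>s\<ge>0. mu_q N n q alpha s \<ge> alpha * (real q / N) powr (1 / real q))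
    \<and> (\<forall>s\<ge>0. mu_q N n q alpha s \<ge> real n / N * s)
    \<and> ((\<lambda>s. mu_q N n q alpha s / s) \<longlongrightarrow> real n / N) at_top"
proof -
  note n = assms(1) and mp = assms(2) and q = assms(3) and a = assms(4) and N = assms(5)
  have cardpos: "real CARD('p) \<ge> 1" by simp
  have Npos: "N > 0" using N mp cardpos q
    by (smt (verit) mult_nonneg_nonneg of_nat_0_le_iff)
  define c where "c = alpha * (real q / N) powr (1 / real q)"
  have qN: "real q / N > 0" using q Npos by simp
  have cpos: "c > 0" unfolding c_def using a qN q by (intro mult_pos_pos) auto
  have cq: "N * c ^ q = real q * alpha ^ q"
  proof -
    have "((real q / N) powr (1 / real q)) ^ q = ((real q / N) powr (1 / real q)) powr (real q)"
      by (rule powr_realpow[symmetric]) (use qN q Npos in simp)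
    also have "\<dots> = real q / N" using qN q Npos by (simp add: powr_powr)
    finally have "c ^ q = alpha ^ q * (real q / N)" unfolding c_def by (simp add: power_mult_distrib)
    thus ?thesis using Npos by (simp add: field_simps)
  qed
  have EU: "\<exists>!x. x > 0 \<and> mu_eq N n q alpha s x" if "s \<ge> 0" for s
    using root_exists[OF q a Npos that cpos cq] root_unique[OF q a Npos that] by blast
  have MU: "mu_q N n q alpha s > 0 \<and> mu_eq N n q alpha s (mu_q N n q alpha s)" if "s \<ge> 0" for s
    unfolding mu_q_def using theI'[OF EU[OF that]] .
  have B: "c \<le> mu_q N n q alpha s" "mu_q N n q alpha s \<le> c + real n * s / N"
      "real n * s / N < mu_q N n q alpha s" if "s \<ge> 0" for s
    using root_bounds[OF q a Npos that cpos cq, of "mu_q N n q alpha s"] MU[OF that] by auto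
  have P1: "\<forall>s\<ge>0. \<exists>!x. x > 0 \<and> mu_eq N n q alpha s x" using EU by blast
  have P2: "is_MAP_Sigma n X (alpha *\<^sub>R mat 1) m q
           (V ** diag_mat (\<lambda>i. mu_q N n q alpha (s i)) ** transpose V)"
    if V: "orthogonal_matrix V" and S: "sample_cov n X = V ** diag_mat s ** transpose V" for V s
  proof -
    have VV: "transpose V ** V = mat 1" "V ** transpose V = mat 1"
      using V by (auto simp: orthogonal_matrix_def)
    have D: "diag_mat s = transpose V ** sample_cov n X ** V"
      unfolding S by (simp add: matrix_mul_assoc VV) (simp add: matrix_mul_assoc[symmetric] VV)
    have spos: "s i \<ge> 0" for i
    proof -
      have "s i = axis i 1 \<bullet> (diag_mat s *v axis i 1)" by (simp add: quad_axis diag_mat_def)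
      also have "\<dots> = axis i 1 \<bullet> (transpose V *v (sample_cov n X *v (V *v axis i 1)))"
        unfolding D by (simp only: matrix_vector_mul_assoc matrix_mul_assoc)
      also have "\<dots> = (V *v axis i 1) \<bullet> (sample_cov n X *v (V *v axis i 1))"
        by (metis dot_lmul_matrix transpose_transpose vector_transpose_matrix)
      also have "\<dots> \<ge> 0" using psd_S[OF n] .
      finally show ?thesis .
    qed
    show ?thesis
      by (rule map_part[OF n q a N Npos V S]) (use MU spos in auto)
  qed
  have P3: "mu_q N n q alpha 0 = c"
  proof -
    have "mu_eq N n q alpha 0 c" using cq by (simp add: mu_eq_def)
    thus ?thesis using MU[of 0] root_unique[OF q a Npos order_refl] cpos by blast
  qed
  have P5: "mu_q N n q alpha s \<ge> real n / N * s" if "s \<ge> 0" for s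
    using B(3)[OF that] by simp
  have P6: "((\<lambda>s. mu_q N n q alpha s / s) \<longlongrightarrow> real n / N) at_top"
  proof (rule tendsto_sandwich[of "\<lambda>s. real n / N" _ _ "\<lambda>s. real n / N + c / s"])
    show "\<forall>\<^sub>F s in at_top. real n / N \<le> mu_q N n q alpha s / s"
      using eventually_gt_at_top[of 0]
    proof eventually_elim
      case (elim s)
      thus ?case using P5[of s] by (simp add: field_simps)
    qed
    show "\<forall>\<^sub>F s in at_top. mu_q N n q alpha s / s \<le> real n / N + c / s"
      using eventually_gt_at_top[of 0]
    proof eventually_elim
      case (elim s)
      hence "mu_q N n q alpha s \<le> c + real n * s / N" using B(2)[of s] by simp
      hence "mu_q N n q alpha s / s \<le> (c + real n * s / N) / s"
        using elim by (intro divide_right_mono) auto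
      also have "\<dots> = real n / N + c / s" using elim by (simp add: field_simps)
      finally show ?case .
    qed
    show "((\<lambda>s. real n / N) \<longlongrightarrow> real n / N) at_top" by simp
    have "((\<lambda>s. c / s) \<longlongrightarrow> 0) at_top"
      by (intro tendsto_divide_0[OF tendsto_const] filterlim_at_top_imp_at_infinity filterlim_ident)
    hence "((\<lambda>s. real n / N + c / s) \<longlongrightarrow> real n / N + 0) at_top"
      by (intro tendsto_add tendsto_const)
    thus "((\<lambda>s. real n / N + c / s) \<longlongrightarrow> real n / N) at_top" by simp
  qed
  show ?thesis using P1 P2 P3 B(1) P5 P6 unfolding c_def by blast
qed


end
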